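(* Let $k\in\mathbb{N}$ and let $p$ be a positive integer. Let $C(m)=\binom{2m}{m+k}=\frac{\Gamma(2m+1)}{\Gamma(m+k+1)\Gamma(m-k+1)}$, which is analytic in $m$ near $m=0$. Then $$C^{(p)}(0)=\frac{(-1)^{p+k}}{k}\,p\,B_{p-1}(\overline{\xi}_1,\overline{\xi}_2,\dots,\overline{\xi}_{p-1}),$$ where for $j\ge1$ $$\overline{\xi}_j=(-2)^j\psi^{(j-1)}(1)+2\,[j\text{ odd}]\,\psi^{(j-1)}(k)-2\,[j\text{ even}]\,\psi^{(j-1)}(1)+\frac{(j-1)!}{k^j}.$$
   Context: $1/\Gamma$ is entire. $\psi^{(n)}(z)=\frac{d^{n+1}}{dz^{n+1}}\log\Gamma(z)$ is the polygamma function ($\psi^{(0)}=\psi$ the digamma function). $[\,\cdot\,]$ is $1$ if the condition holds and $0$ otherwise. $B_n(s_1,\dots,s_n)$ denotes the complete Bell polynomial, defined by $\exp\big(\sum_{j\ge1}s_j t^j/j!\big)=\sum_{n\ge0}B_n(s_1,\dots,s_n)t^n/n!$; in particular $B_0=1$. *)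

theory Defs
  imports "HOL-Analysis.Analysis" "HOL-Computational_Algebra.Formal_Power_Series"
begin

text \<open>Complete Bell polynomial B_n(s_1,...,s_n), defined through the exponential
generating function exp(sum_{j>=1} s_j t^j / j!) = sum_n B_n t^n / n!.
Only s_1,...,s_n are used.\<close>
definition complete_bell :: "nat \<Rightarrow> (nat \<Rightarrow> real) \<Rightarrow> real" where
  "complete_bell n s =
     fact n * fps_nth (fps_exp 1 oo Abs_fps (\<lambda>j. if 1 \<le> j \<and> j \<le> n then s j / fact j else 0)) n"

text \<open>C(m) = Gamma(2m+1) / (Gamma(m+k+1) Gamma(m-k+1)), with 1/Gamma = rGamma entire.\<close>
definition binomC :: "nat \<Rightarrow> real \<Rightarrow> real" where
  "binomC k m = Gamma (2*m + 1) * rGamma (m + real k + 1) * rGamma (m - real k + 1)"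

definition xibar :: "nat \<Rightarrow> nat \<Rightarrow> real" where
  "xibar k j = (-2)^j * Polygamma (j-1) 1
      + 2 * (if odd j then 1 else 0) * Polygamma (j-1) (real k)
      - 2 * (if even j then 1 else 0) * Polygamma (j-1) 1
      + fact (j-1) / real k ^ j"

end

theory Submission
  imports Defs "HOL-Complex_Analysis.Complex_Analysis"
begin

definition bA :: "nat \<Rightarrow> (nat \<Rightarrow> real) \<Rightarrow> real fps" where
  "bA N s = Abs_fps (\<lambda>j. if 1 \<le> j \<and> j \<le> N then s j / fact j else 0)"
definition bN :: "nat \<Rightarrow> (nat \<Rightarrow> real) \<Rightarrow> nat \<Rightarrow> real" where
  "bN N s m = fact m * fps_nth (fps_exp 1 oo bA N s) m"

lemma bN_0: "bN N s 0 = 1"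
  by (simp add: bN_def bA_def)

lemma bN_Suc: "bN N s (Suc m) =
   (\<Sum>i=0..m. real (m choose i) * (if Suc i \<le> N then s (Suc i) else 0) * bN N s (m - i))"
proof -
  let ?E = "fps_exp 1 oo bA N s"
  have d: "fps_deriv ?E = fps_deriv (bA N s) * ?E"
    by (subst fps_compose_deriv) (simp_all add: bA_def mult.commute)
  have "fps_nth (fps_deriv ?E) m = fps_nth (fps_deriv (bA N s) * ?E) m" using d by simp
  hence "real (Suc m) * fps_nth ?E (Suc m) = (\<Sum>i=0..m. (real (Suc i) * fps_nth (bA N s) (Suc i)) * fps_nth ?E (m - i))"
    by (simp add: fps_mult_nth)
  hence "fact m * (real (Suc m) * fps_nth ?E (Suc m)) = fact m * (\<Sum>i=0..m. (real (Suc i) * fps_nth (bA N s) (Suc i)) * fps_nth ?E (m - i))"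
    by simp
  also have "\<dots> = (\<Sum>i=0..m. real (m choose i) * (if Suc i \<le> N then s (Suc i) else 0) * bN N s (m - i))"
    unfolding sum_distrib_left
  proof (rule sum.cong[OF refl])
    fix i assume i: "i \<in> {0..m}"
    hence im: "i \<le> m" by simp
    have fm: "fact m = real (m choose i) * fact i * fact (m - i)"
      using binomial_fact[OF im, where 'a=real] by (simp add: field_simps)
    have c: "fps_nth (bA N s) (Suc i) = (if Suc i \<le> N then s (Suc i) / fact (Suc i) else 0)"
      by (simp add: bA_def)
    have fs: "fact (Suc i) = real (Suc i) * (fact i :: real)" by simp
    show "fact m * (real (Suc i) * fps_nth (bA N s) (Suc i) * fps_nth ?E (m - i)) =
       real (m choose i) * (if Suc i \<le> N then s (Suc i) else 0) * bN N s (m - i)"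
      unfolding c bN_def fs fm by (simp del: of_nat_Suc)
  qed
  finally show ?thesis by (simp add: bN_def algebra_simps)
qed

lemma bN_indep: "m \<le> N \<Longrightarrow> m \<le> M \<Longrightarrow> bN N s m = bN M s m"
proof (induction m arbitrary: N M rule: less_induct)
  case (less m)
  show ?case
  proof (cases m)
    case 0 then show ?thesis by (simp add: bN_0)
  next
    case (Suc n)
    show ?thesis unfolding Suc bN_Suc
      by (rule sum.cong[OF refl]) (use less Suc in auto)
  qed
qed

lemma complete_bell_bN: "complete_bell n s = bN n s n"
  by (simp add: complete_bell_def bN_def bA_def)

lemma complete_bell_0: "complete_bell 0 s = 1"
  by (simp add: complete_bell_bN bN_0)

lemma complete_bell_Suc: "complete_bell (Suc n) s =
   (\<Sum>i=0..n. real (n choose i) * s (Suc i) * complete_bell (n - i) s)"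
  unfolding complete_bell_bN bN_Suc
  by (rule sum.cong[OF refl]) (auto intro: bN_indep)

lemma exp_deriv_bell:
  fixes F h :: "complex \<Rightarrow> complex" and c B :: "nat \<Rightarrow> complex"
  assumes F: "F holomorphic_on S" and h: "h holomorphic_on S" and S: "open S" and z: "z \<in> S"
    and dF: "\<And>w. w \<in> S \<Longrightarrow> deriv F w = h w * F w"
    and B0: "B 0 = 1"
    and BS: "\<And>n. B (Suc n) = (\<Sum>i=0..n. of_nat (n choose i) * c (Suc i) * B (n - i))"
    and hc: "\<And>j. (deriv ^^ j) h z = c (Suc j)"
  shows "(deriv ^^ n) F z = F z * B n"
proof (induction n rule: less_induct)
  case (less n)
  show ?case
  proof (cases n)
    case 0 then show ?thesis by (simp add: B0)
  next
    case (Suc m)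
    have "(deriv ^^ n) F z = (deriv ^^ m) (deriv F) z"
      unfolding Suc by (simp add: funpow_Suc_right del: funpow.simps)
    also have "\<dots> = (deriv ^^ m) (\<lambda>w. h w * F w) z"
      by (rule higher_deriv_transform_within_open[OF _ _ S z])
         (auto intro!: holomorphic_intros F h S dF holomorphic_deriv)
    also have "\<dots> = (\<Sum>i = 0..m. of_nat (m choose i) * (deriv ^^ i) h z * (deriv ^^ (m-i)) F z)"
      by (rule higher_deriv_mult[OF h F S z])
    also have "\<dots> = (\<Sum>i = 0..m. of_nat (m choose i) * c (Suc i) * (F z * B (m - i)))"
      by (rule sum.cong[OF refl]) (use less Suc hc in auto)
    also have "\<dots> = F z * B n" unfolding Suc BS sum_distrib_left
      by (rule sum.cong[OF refl]) (simp add: algebra_simps)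
    finally show ?thesis .
  qed
qed

lemma real_higher_deriv_transfer:
  fixes f :: "real \<Rightarrow> real" and F :: "complex \<Rightarrow> complex"
  assumes F: "F holomorphic_on S" and S: "open S"
    and fF: "\<And>x. complex_of_real x \<in> S \<Longrightarrow> F (of_real x) = of_real (f x)"
  shows "complex_of_real x \<in> S \<Longrightarrow> (deriv ^^ n) f x = Re ((deriv ^^ n) F (of_real x))"
proof (induction n arbitrary: x)
  case 0 then show ?case by (simp add: fF)
next
  case (Suc n x)
  define U where "U = complex_of_real -` S"
  have U: "open U" unfolding U_def
    by (rule open_vimage[OF S]) (intro continuous_intros)
  have xU: "x \<in> U" using Suc.prems by (simp add: U_def)
  have "((deriv ^^ n) F has_field_derivative (deriv ^^ Suc n) F (of_real x)) (at (of_real x))"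
    by (rule has_field_derivative_higher_deriv[OF F S Suc.prems])
  hence "((\<lambda>y. (deriv ^^ n) F (of_real y)) has_vector_derivative (deriv ^^ Suc n) F (of_real x)) (at x)"
    by (rule has_vector_derivative_real_field)
  hence "((\<lambda>y. Re ((deriv ^^ n) F (of_real y))) has_vector_derivative Re ((deriv ^^ Suc n) F (of_real x))) (at x)"
    by (rule bounded_linear.has_vector_derivative[OF bounded_linear_Re])
  hence "((\<lambda>y. Re ((deriv ^^ n) F (of_real y))) has_field_derivative Re ((deriv ^^ Suc n) F (of_real x))) (at x)"
    by (simp add: has_real_derivative_iff_has_vector_derivative)
  hence "((deriv ^^ n) f has_field_derivative Re ((deriv ^^ Suc n) F (of_real x))) (at x)"
    by (rule has_field_derivative_transform_within_open[OF _ U xU]) (use Suc.IH in \<open>auto simp: U_def\<close>)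
  thus ?case by (simp add: DERIV_imp_deriv)
qed

definition S0 :: "complex set" where "S0 = ball 0 (1/2)"

lemma Re_pos_nonpos: "Re z > 0 \<Longrightarrow> z \<notin> \<int>\<^sub>\<le>\<^sub>0"
  by (auto elim!: nonpos_Ints_cases')

lemma S0_Re: "w \<in> S0 \<Longrightarrow> \<bar>Re w\<bar> < 1/2"
  unfolding S0_def using abs_Re_le_cmod[of w] by (auto simp: dist_norm)

definition Fc :: "nat \<Rightarrow> complex \<Rightarrow> complex" where
  "Fc k m = Gamma (2*m + 1) * rGamma (m + of_nat k + 1) * rGamma (m - of_nat k + 1)"

definition FF :: "nat \<Rightarrow> complex \<Rightarrow> complex" where
  "FF k w = (-1)^(k-1) * Gamma ((-2)*w + 1) * rGamma ((-1)*w + (of_nat k + 1))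
      * Gamma (1*w + of_nat k) * rGamma (1*w + 1) * rGamma ((-1)*w + 1)"

definition HH :: "nat \<Rightarrow> complex \<Rightarrow> complex" where
  "HH k w = (-2) * Digamma ((-2)*w + 1) + Digamma ((-1)*w + (of_nat k + 1))
      + Digamma (1*w + of_nat k) - Digamma (1*w + 1) + Digamma ((-1)*w + 1)"

lemma S0_args:
  assumes "w \<in> S0" "k \<ge> 1"
  shows "(-2)*w + 1 \<notin> \<int>\<^sub>\<le>\<^sub>0" "(-1)*w + (of_nat k + 1) \<notin> \<int>\<^sub>\<le>\<^sub>0"
        "1*w + of_nat k \<notin> \<int>\<^sub>\<le>\<^sub>0" "1*w + 1 \<notin> \<int>\<^sub>\<le>\<^sub>0" "(-1)*w + 1 \<notin> \<int>\<^sub>\<le>\<^sub>0"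
        "2*w + 1 \<notin> \<int>\<^sub>\<le>\<^sub>0"
proof -
  have r: "\<bar>Re w\<bar> < 1/2" by (rule S0_Re[OF assms(1)])
  have k: "real k \<ge> 1" using assms(2) by simp
  show "(-2)*w + 1 \<notin> \<int>\<^sub>\<le>\<^sub>0" by (rule Re_pos_nonpos) (use r k in simp)
  show "(-1)*w + (of_nat k + 1) \<notin> \<int>\<^sub>\<le>\<^sub>0" by (rule Re_pos_nonpos) (use r k in simp)
  show "1*w + of_nat k \<notin> \<int>\<^sub>\<le>\<^sub>0" by (rule Re_pos_nonpos) (use r k in simp)
  show "1*w + 1 \<notin> \<int>\<^sub>\<le>\<^sub>0" by (rule Re_pos_nonpos) (use r k in simp)
  show "(-1)*w + 1 \<notin> \<int>\<^sub>\<le>\<^sub>0" by (rule Re_pos_nonpos) (use r k in simp)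
  show "2*w + 1 \<notin> \<int>\<^sub>\<le>\<^sub>0" by (rule Re_pos_nonpos) (use r k in simp)
qed

lemma open_S0: "open S0" by (simp add: S0_def)
lemma zero_S0: "0 \<in> S0" by (simp add: S0_def)
lemma S0_neg: "w \<in> S0 \<Longrightarrow> (-1) * w \<in> S0" by (simp add: S0_def)

lemma FF_ana: "k \<ge> 1 \<Longrightarrow> FF k analytic_on S0"
  unfolding FF_def
  by (intro analytic_intros ballI) (use S0_args in auto)

lemma FF_holo: "k \<ge> 1 \<Longrightarrow> FF k holomorphic_on S0"
  using FF_ana analytic_imp_holomorphic by blast

lemma HH_ana: "k \<ge> 1 \<Longrightarrow> HH k analytic_on S0"
  unfolding HH_def
  by (intro analytic_intros ballI) (use S0_args in auto)

lemma HH_holo: "k \<ge> 1 \<Longrightarrow> HH k holomorphic_on S0"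
  using HH_ana analytic_imp_holomorphic by blast

lemma Fc_holo: "Fc k holomorphic_on S0"
  unfolding Fc_def
  by (intro analytic_imp_holomorphic analytic_intros ballI) (use S0_args[of _ 1] in auto)

lemma Gamma_rGamma_1: "z \<notin> \<int>\<^sub>\<le>\<^sub>0 \<Longrightarrow> Gamma z * rGamma z = 1"
  by (simp add: Gamma_def rGamma_eq_zero_iff)

lemma Fc_FF:
  assumes k: "k \<ge> 1" and m: "m \<in> S0"
  shows "Fc k m = m * FF k ((-1) * m)"
proof -
  obtain k' where kk: "k = Suc k'" using k by (cases k) auto
  have a1: "rGamma (m - of_nat k + 1) = pochhammer (m - of_nat k + 1) k * rGamma (m + 1)"
    using pochhammer_rGamma[of "m - of_nat k + 1" k] by simp
  have a2: "pochhammer (m - of_nat k + 1) k = pochhammer (m - of_nat k') k' * m"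
    unfolding kk by (simp add: pochhammer_Suc algebra_simps)
  have a3: "pochhammer (m - of_nat k') k' = (-1)^k' * pochhammer (1 - m) k'"
    using pochhammer_minus[of "of_nat k' - m" k'] by (simp add: algebra_simps)
  have nn: "1 - m + of_nat k' \<notin> \<int>\<^sub>\<le>\<^sub>0"
    using S0_args(3)[OF S0_neg[OF m] k] by (simp add: kk algebra_simps)
  have a4: "pochhammer (1 - m) k' = rGamma (1 - m) * Gamma (1 - m + of_nat k')"
  proof -
    have "rGamma (1 - m) * Gamma (1 - m + of_nat k') =
          pochhammer (1 - m) k' * (Gamma (1 - m + of_nat k') * rGamma (1 - m + of_nat k'))"
      by (subst pochhammer_rGamma[of "1 - m" k']) (simp add: algebra_simps)
    thus ?thesis using Gamma_rGamma_1[OF nn] by simp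
  qed
  show ?thesis
    unfolding Fc_def FF_def a1 a2 a3 a4
    by (simp add: kk algebra_simps)
qed

lemma FF_deriv:
  assumes k: "k \<ge> 1" and w: "w \<in> S0"
  shows "deriv (FF k) w = HH k w * FF k w"
proof -
  note a = S0_args[OF w k]
  have "(FF k has_field_derivative HH k w * FF k w) (at w)"
    unfolding FF_def HH_def
    apply (rule derivative_eq_intros has_field_derivative_rGamma_no_nonpos_int[THEN DERIV_chain2]
           has_field_derivative_Gamma[THEN DERIV_chain2] refl a)+
    by (simp add: algebra_simps)
  thus ?thesis by (rule DERIV_imp_deriv)
qed

lemma digamma_lin:
  fixes u c :: complex
  assumes "\<And>w. w \<in> S0 \<Longrightarrow> Re (u*w+c) > 0"
  shows "(deriv^^j) (\<lambda>w. Digamma (u*w+c)) 0 = u^j * Polygamma j c"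
proof -
  have T: "Polygamma 0 holomorphic_on {z. Re z > 0}"
    by (rule holomorphic_on_Polygamma) (auto dest: Re_pos_nonpos)
  have "(deriv^^j) (\<lambda>w. Digamma (u*w+c)) 0 = u^j * (deriv^^j) (Polygamma 0) (u*0+c)"
    by (rule higher_deriv_compose_linear'[OF T open_S0 open_halfspace_Re_gt zero_S0])
       (use assms in auto)
  also have "\<dots> = u^j * Polygamma j c"
    using assms[OF zero_S0] by (simp add: higher_deriv_Polygamma Re_pos_nonpos)
  finally show ?thesis .
qed

lemma digamma_an:
  fixes u c :: complex
  assumes "Re c > 0"
  shows "(\<lambda>w. Digamma (u*w+c)) analytic_on {0}"
  by (intro analytic_intros) (use assms Re_pos_nonpos in auto)

lemma HH_hderiv:
  assumes k: "k \<ge> 1"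
  shows "(deriv^^j) (HH k) 0 = (-2) * (-2)^j * Polygamma j 1 + (-1)^j * Polygamma j (of_nat k + 1)
       + Polygamma j (of_nat k) - Polygamma j 1 + (-1)^j * Polygamma j 1"
proof -
  define dA where "dA = (\<lambda>w::complex. Digamma ((-2)*w+1))"
  define dB where "dB = (\<lambda>w::complex. Digamma ((-1)*w+(of_nat k + 1)))"
  define dC where "dC = (\<lambda>w::complex. Digamma (1*w + of_nat k))"
  define dD where "dD = (\<lambda>w::complex. Digamma (1*w+1))"
  define dE where "dE = (\<lambda>w::complex. Digamma ((-1)*w+1))"
  have kr: "real k \<ge> 1" using k by simp
  have a1: "dA analytic_on {0}" unfolding dA_def by (rule digamma_an) simp
  have a2: "dB analytic_on {0}" unfolding dB_def by (rule digamma_an) simp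
  have a3: "dC analytic_on {0}" unfolding dC_def by (rule digamma_an) (use kr in simp)
  have a4: "dD analytic_on {0}" unfolding dD_def by (rule digamma_an) simp
  have a5: "dE analytic_on {0}" unfolding dE_def by (rule digamma_an) simp
  have d1: "(deriv^^j) dA 0 = (-2)^j * Polygamma j 1" unfolding dA_def
    by (rule digamma_lin) (use S0_Re in fastforce)
  have d2: "(deriv^^j) dB 0 = (-1)^j * Polygamma j (of_nat k + 1)" unfolding dB_def
    by (rule digamma_lin) (use S0_Re in fastforce)
  have d3: "(deriv^^j) dC 0 = Polygamma j (of_nat k)" unfolding dC_def
    using digamma_lin[of 1 "of_nat k" j] S0_Re kr by fastforce
  have d4: "(deriv^^j) dD 0 = Polygamma j 1" unfolding dD_def
    using digamma_lin[of 1 1 j] S0_Re by fastforce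
  have d5: "(deriv^^j) dE 0 = (-1)^j * Polygamma j 1" unfolding dE_def
    by (rule digamma_lin) (use S0_Re in fastforce)
  have HH: "HH k = (\<lambda>w. (-2) * dA w + dB w + dC w - dD w + dE w)"
    by (simp add: fun_eq_iff HH_def dA_def dB_def dC_def dD_def dE_def)
  have "(deriv^^j) (HH k) 0 = (deriv^^j) (\<lambda>w. (-2) * dA w + dB w + dC w - dD w) 0 + (deriv^^j) dE 0"
    unfolding HH by (rule higher_deriv_add_at) (intro analytic_intros a1 a2 a3 a4 a5)+
  also have "(deriv^^j) (\<lambda>w. (-2) * dA w + dB w + dC w - dD w) 0 =
     (deriv^^j) (\<lambda>w. (-2) * dA w + dB w + dC w) 0 - (deriv^^j) dD 0"
    by (rule higher_deriv_diff_at) (intro analytic_intros a1 a2 a3 a4 a5)+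
  also have "(deriv^^j) (\<lambda>w. (-2) * dA w + dB w + dC w) 0 =
     (deriv^^j) (\<lambda>w. (-2) * dA w + dB w) 0 + (deriv^^j) dC 0"
    by (rule higher_deriv_add_at) (intro analytic_intros a1 a2 a3 a4 a5)+
  also have "(deriv^^j) (\<lambda>w. (-2) * dA w + dB w) 0 =
     (deriv^^j) (\<lambda>w. (-2) * dA w) 0 + (deriv^^j) dB 0"
    by (rule higher_deriv_add_at) (intro analytic_intros a1 a2 a3 a4 a5)+
  also have "(deriv^^j) (\<lambda>w. (-2) * dA w) 0 = (-2) * (deriv^^j) dA 0"
    by (rule higher_deriv_cmult'[OF a1])
  finally show ?thesis by (simp add: d1 d2 d3 d4 d5)
qed

lemma Polygamma_nat_of_real: "k \<ge> 1 \<Longrightarrow> Polygamma j (of_nat k :: complex) = of_real (Polygamma j (real k))"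
  using Polygamma_of_real[of "real k" j] by simp

lemma HH_xibar:
  assumes k: "k \<ge> 1"
  shows "(deriv^^j) (HH k) 0 = complex_of_real (xibar k (Suc j))"
proof -
  have k0: "(of_nat k :: complex) \<noteq> 0" using k by simp
  have p1: "Polygamma j (of_nat k + 1 :: complex) = Polygamma j (of_nat k) + (-1)^j * fact j / (of_nat k)^Suc j"
    by (rule Polygamma_plus1[OF k0])
  have pk: "Polygamma j (of_nat k :: complex) = of_real (Polygamma j (real k))"
    by (rule Polygamma_nat_of_real[OF k])
  have pone: "Polygamma j (1 :: complex) = of_real (Polygamma j 1)"
    using Polygamma_nat_of_real[of 1 j] by simp
  define P1 where "P1 = Polygamma j (1::real)"
  define Pk where "Pk = Polygamma j (real k)"
  have "(deriv^^j) (HH k) 0 = complex_of_real ((-2)*(-2)^j*P1 + (-1)^j*(Pk + (-1)^j*fact j/(real k)^Suc j) + Pk - P1 + (-1)^j * P1)"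
    unfolding HH_hderiv[OF k] p1 pk pone P1_def Pk_def by simp
  also have "(-2)*(-2)^j*P1 + (-1)^j*(Pk + (-1)^j*fact j/(real k)^Suc j) + Pk - P1 + (-1)^j * P1 = xibar k (Suc j)"
  proof (cases "even j")
    case True
    then show ?thesis by (simp add: xibar_def P1_def Pk_def)
  next
    case False
    then show ?thesis by (simp add: xibar_def P1_def Pk_def)
  qed
  finally show ?thesis .
qed

lemma FF_0: "k \<ge> 1 \<Longrightarrow> FF k 0 = complex_of_real ((-1)^(k-1) / real k)"
proof -
  assume k: "k \<ge> 1"
  have nz: "Gamma (of_nat k :: complex) * rGamma (of_nat k) = 1"
    using S0_args(3)[OF zero_S0 k] by (intro Gamma_rGamma_1) simp
  have r: "of_nat k * rGamma (of_nat k + 1 :: complex) = rGamma (of_nat k)"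
    by (rule rGamma_plus1)
  have k0: "(of_nat k :: complex) \<noteq> 0" using k by simp
  have gnz: "Gamma (of_nat k :: complex) \<noteq> 0" using nz by auto
  have rg0: "rGamma (1 + of_nat k :: complex) = rGamma (of_nat k) / of_nat k"
    using r k0 by (simp add: field_simps add.commute)
  have rg: "rGamma (1 + of_nat k :: complex) = inverse (Gamma (of_nat k)) / of_nat k"
    unfolding rg0 by (simp add: rGamma_inverse_Gamma)
  show ?thesis unfolding FF_def using gnz k0 by (simp add: rg field_simps)
qed

lemma main_complex:
  assumes k: "k \<ge> 1" and p: "p \<ge> 1"
  shows "(deriv ^^ p) (Fc k) 0 = complex_of_real ((-1)^(p+k) / real k * real p * complete_bell (p-1) (xibar k))"
proof -
  define f where "f = (\<lambda>m. FF k ((-1) * m))"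
  have fh: "f holomorphic_on S0" unfolding f_def FF_def
    by (intro analytic_imp_holomorphic analytic_intros ballI) (use S0_args[OF S0_neg] k in auto)
  have bell: "(deriv ^^ n) (FF k) 0 = FF k 0 * complex_of_real (complete_bell n (xibar k))" for n
    by (rule exp_deriv_bell[OF FF_holo[OF k] HH_holo[OF k] open_S0 zero_S0, where c="\<lambda>j. complex_of_real (xibar k j)"])
       (auto simp: FF_deriv[OF k] complete_bell_0 complete_bell_Suc HH_xibar[OF k])
  have fd: "(deriv ^^ n) f 0 = (-1)^n * (deriv ^^ n) (FF k) 0" for n
    unfolding f_def using higher_deriv_compose_linear[OF FF_holo[OF k] open_S0 open_S0 zero_S0, of "-1" n]
    using S0_neg by simp
  have "(deriv ^^ p) (Fc k) 0 = (deriv ^^ p) (\<lambda>m. m * f m) 0"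
  proof (rule higher_deriv_transform_within_open[OF Fc_holo _ open_S0 zero_S0])
    show "(\<lambda>m. m * f m) holomorphic_on S0" by (intro holomorphic_intros fh)
  next
    fix w assume "w \<in> S0" thus "Fc k w = w * f w" by (simp add: Fc_FF[OF k] f_def)
  qed
  also have "\<dots> = (\<Sum>i = 0..p. of_nat (p choose i) * (deriv ^^ i) (\<lambda>w. w) 0 * (deriv ^^ (p-i)) f 0)"
    by (rule higher_deriv_mult[OF _ fh open_S0 zero_S0]) (intro holomorphic_intros)
  also have "\<dots> = (\<Sum>i = 0..p. if i = 1 then of_nat p * (deriv ^^ (p-1)) f 0 else 0)"
    by (rule sum.cong[OF refl]) auto
  also have "\<dots> = of_nat p * (deriv ^^ (p-1)) f 0" using p by simp
  also have "\<dots> = complex_of_real ((-1)^(p+k) / real k * real p * complete_bell (p-1) (xibar k))"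
  proof -
    obtain p' where pp: "p = Suc p'" using p by (cases p) auto
    obtain k' where kk: "k = Suc k'" using k by (cases k) auto
    have "of_nat p * (deriv ^^ (p-1)) f 0 = of_nat p * ((-1)^(p-1) * (FF k 0 * complex_of_real (complete_bell (p-1) (xibar k))))"
      by (simp only: fd bell)
    also have "\<dots> = complex_of_real ((-1)^(p+k) / real k * real p * complete_bell (p-1) (xibar k))"
      unfolding FF_0[OF k] unfolding pp kk by (simp add: power_add algebra_simps)
    finally show ?thesis .
  qed
  finally show ?thesis .
qed

theorem theorem4:
  fixes k p :: nat
  assumes "k \<ge> 1" and "p \<ge> 1"
  shows "(deriv ^^ p) (binomC k) 0
           = (-1)^(p+k) / real k * real p * complete_bell (p-1) (xibar k)"
proof -
  have eq: "Fc k (of_real x) = complex_of_real (binomC k x)" for x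
  proof -
    have "complex_of_real (binomC k x) = Gamma (of_real (2*x+1)) * rGamma (of_real (x + real k + 1)) * rGamma (of_real (x - real k + 1))"
      unfolding binomC_def Gamma_complex_of_real rGamma_complex_of_real by simp
    also have "\<dots> = Fc k (of_real x)" unfolding Fc_def by simp
    finally show ?thesis by simp
  qed
  have "(deriv ^^ p) (binomC k) 0 = Re ((deriv ^^ p) (Fc k) (of_real 0))"
    by (rule real_higher_deriv_transfer[OF Fc_holo open_S0]) (auto simp: eq zero_S0)
  also have "\<dots> = (-1)^(p+k) / real k * real p * complete_bell (p-1) (xibar k)"
    using main_complex[OF assms] by simp
  finally show ?thesis .
qed

end
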